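(* Let $A$ and $B$ be strings with self-referential LZ77 parses $Z_A$ and $Z_B$. Suppose Alice knows $A$, Bob knows $B$, and the length of the longest common prefix of $Z_A$ and $Z_B$ is known. Then the parties can determine $\ell=\mathrm{LCP}(A,B)$ using either (1) $O(1+\lg\lg\ell)$ rounds and $O(\lg\ell)$ communication, or (2) $O(1)$ rounds and $O(\lg\ell+\lg\lg\lg|A|)$ communication.
   Context: $\mathrm{LCP}(X,Y)$ is the length of the longest common prefix of $X$ and $Y$. The self-referential LZ77 parse of a string $S$ divides $S$ greedily from left to right into phrases. The $i$-th phrase, starting at $u_i$, is the longest substring having an occurrence (its source) starting at a position $s_i<u_i$, where the source may overlap the phrase, followed by the next symbol. It is represented as a tuple $(s_i,l_i,\alpha_i)$, and the parse is viewed as a string of tuples. A fixed deterministic parsing rule makes equal strings have equal parses. Protocols are randomized public-coin: the parties share random bits, and the output must be correct with probability at least a fixed constant greater than $1/2$. *)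

theory Defs
  imports "HOL-Probability.Probability"
begin

fun lcp :: "'b list \<Rightarrow> 'b list \<Rightarrow> nat" where
  "lcp (x # xs) (y # ys) = (if x = y then Suc (lcp xs ys) else 0)"
| "lcp _ _ = 0"

text \<open>Length of the phrase (without its trailing symbol) starting at position u:
  the longest length l such that S[u..u+l) has an occurrence starting at some s < u
  (overlap allowed, i.e. l \<le> lcp of the suffixes at s and u) and such that the
  next symbol S[u+l] exists.\<close>
definition lz_len :: "'a list \<Rightarrow> nat \<Rightarrow> nat" where
  "lz_len S u = Max (insert 0 {min (lcp (drop s S) (drop u S)) (length S - u - 1) | s. s < u})"

definition lz_src :: "'a list \<Rightarrow> nat \<Rightarrow> nat" where
  "lz_src S u = (if lz_len S u = 0 then 0
                 else (LEAST s. s < u \<and> lcp (drop s S) (drop u S) \<ge> lz_len S u))"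

function lz_from :: "'a list \<Rightarrow> nat \<Rightarrow> (nat \<times> nat \<times> 'a) list" where
  "lz_from S u = (if length S \<le> u then []
      else (lz_src S u, lz_len S u, S ! (u + lz_len S u)) # lz_from S (u + lz_len S u + 1))"
  by pat_completeness auto
termination by (relation "Wellfounded.measure (\<lambda>(S, u). length S - u)") auto

definition lz77 :: "'a list \<Rightarrow> (nat \<times> nat \<times> 'a) list" where
  "lz77 S = lz_from S 0"

definition coins :: "(nat \<Rightarrow> bool) measure" where
  "coins = (\<Pi>\<^sub>M i\<in>UNIV. measure_pmf (bernoulli_pmf (1/2)))"

text \<open>A protocol: each party's next message depends on its own input, the common
  knowledge k (= LCP of the two parses), the public coins, and the transcript so far.
  Alice speaks in even-numbered rounds, Bob in odd-numbered rounds.  Whether the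
  protocol has stopped is a function of public information only.\<close>
record 'a protocol =
  msgA :: "'a list \<Rightarrow> nat \<Rightarrow> (nat \<Rightarrow> bool) \<Rightarrow> bool list list \<Rightarrow> bool list"
  msgB :: "'a list \<Rightarrow> nat \<Rightarrow> (nat \<Rightarrow> bool) \<Rightarrow> bool list list \<Rightarrow> bool list"
  halt :: "nat \<Rightarrow> (nat \<Rightarrow> bool) \<Rightarrow> bool list list \<Rightarrow> bool"
  outA :: "'a list \<Rightarrow> nat \<Rightarrow> (nat \<Rightarrow> bool) \<Rightarrow> bool list list \<Rightarrow> nat"
  outB :: "'a list \<Rightarrow> nat \<Rightarrow> (nat \<Rightarrow> bool) \<Rightarrow> bool list list \<Rightarrow> nat"

fun transcript :: "'a protocol \<Rightarrow> 'a list \<Rightarrow> 'a list \<Rightarrow> nat \<Rightarrow> (nat \<Rightarrow> bool) \<Rightarrow> nat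
                     \<Rightarrow> bool list list" where
  "transcript P x y k r 0 = []"
| "transcript P x y k r (Suc n) =
     (let t = transcript P x y k r n in
        t @ [if even n then msgA P x k r t else msgB P y k r t])"

definition comm_cost :: "bool list list \<Rightarrow> nat" where
  "comm_cost t = (\<Sum>m\<leftarrow>t. length m + 1)"

definition good_run :: "'a protocol \<Rightarrow> 'a list \<Rightarrow> 'a list \<Rightarrow> nat \<Rightarrow> (nat \<Rightarrow> bool)
                        \<Rightarrow> real \<Rightarrow> real \<Rightarrow> nat \<Rightarrow> bool" where
  "good_run P x y k r R Q v \<longleftrightarrow>
     (\<exists>n. halt P k r (transcript P x y k r n)
        \<and> (\<forall>m<n. \<not> halt P k r (transcript P x y k r m))
        \<and> real n \<le> R
        \<and> real (comm_cost (transcript P x y k r n)) \<le> Q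
        \<and> outA P x k r (transcript P x y k r n) = v
        \<and> outB P y k r (transcript P x y k r n) = v)"

text \<open>Binary logarithm clamped below at 1, used inside O-bounds.\<close>
definition lg :: "real \<Rightarrow> real" where
  "lg x = log 2 (max 2 x)"

end

theory Submission
  imports Defs
begin

lemma lcp_ge_iff: "n \<le> lcp xs ys \<longleftrightarrow> n \<le> length xs \<and> n \<le> length ys \<and> take n xs = take n ys"
proof (induction xs ys arbitrary: n rule: lcp.induct)
  case (1 x xs y ys)
  then show ?case by (cases n) auto
qed auto

lemma lcp_comm: "lcp xs ys = lcp ys xs"
  by (induction xs ys rule: lcp.induct) auto

lemma lcp_take: "lcp (take c xs) (take c ys) = min (lcp xs ys) c"
proof (induction xs ys arbitrary: c rule: lcp.induct)
  case (1 x xs y ys)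
  then show ?case by (cases c) auto
qed auto

fun bin :: "nat \<Rightarrow> bool list" where
  "bin n = (if n = 0 then [] else odd n # bin (n div 2))"
declare bin.simps[simp del]

fun unbin :: "bool list \<Rightarrow> nat" where
  "unbin [] = 0"
| "unbin (b # bs) = (if b then 1 else 0) + 2 * unbin bs"

lemma unbin_bin[simp]: "unbin (bin n) = n"
  by (induction n rule: bin.induct) (subst bin.simps, auto)

lemma bin_lt: "n < 2 ^ length (bin n)"
proof (induction n rule: bin.induct)
  case (1 n) then show ?case by (subst bin.simps) auto
qed

lemma bin_ge: "n > 0 \<Longrightarrow> 2 ^ (length (bin n) - 1) \<le> n"
proof (induction n rule: bin.induct)
  case (1 n)
  show ?case
  proof (cases "n div 2 = 0")
    case True then have "n = 1" using 1(2) by auto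
    then show ?thesis by (simp add: bin.simps)
  next
    case False
    then have "2 ^ (length (bin (n div 2)) - 1) \<le> n div 2" using 1 by auto
    moreover have "length (bin n) = Suc (length (bin (n div 2)))" using 1(2) by (subst bin.simps) auto
    moreover have "length (bin (n div 2)) > 0" using False by (subst bin.simps) auto
    ultimately show ?thesis by (cases "length (bin (n div 2))") auto
  qed
qed

lemma bin_len_le: "n < 2 ^ w \<Longrightarrow> length (bin n) \<le> w"
proof (rule ccontr)
  assume "n < 2 ^ w" "\<not> length (bin n) \<le> w"
  then have "n > 0" by (cases n) (auto simp: bin.simps)
  from bin_ge[OF this] have "2 ^ (length (bin n) - 1) \<le> n" .
  moreover have "w \<le> length (bin n) - 1" using \<open>\<not> length (bin n) \<le> w\<close> by auto
  then have "2 ^ w \<le> (2::nat) ^ (length (bin n) - 1)"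
    by (rule power_increasing) auto
  ultimately show False using \<open>n < 2 ^ w\<close> by linarith
qed

lemma bin_mono: "m \<le> n \<Longrightarrow> length (bin m) \<le> length (bin n)"
  using bin_len_le[of m "length (bin n)"] bin_lt[of n] by auto

fun lz_pos :: "'a list \<Rightarrow> nat \<Rightarrow> nat \<Rightarrow> nat" where
  "lz_pos S u 0 = u"
| "lz_pos S u (Suc k) = lz_pos S (u + lz_len S u + 1) k"

declare lz_from.simps[simp del]

lemma lz_set_eq: "{min (lcp (drop s S) (drop u S)) (length S - u - 1) | s. s < u}
   = (\<lambda>s. min (lcp (drop s S) (drop u S)) (length S - u - 1)) ` {..<u}"
  by auto

lemma lz_len_le: "lz_len S u \<le> length S - u - 1"
  unfolding lz_len_def lz_set_eq by (subst Max_le_iff) auto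

lemma lz_len_ge: "s < u \<Longrightarrow> min (lcp (drop s S) (drop u S)) (length S - u - 1) \<le> lz_len S u"
  unfolding lz_len_def lz_set_eq by (rule Max_ge) auto

lemma lz_len_ex: "lz_len S u > 0 \<Longrightarrow> \<exists>s<u. lz_len S u \<le> lcp (drop s S) (drop u S)"
proof -
  assume "lz_len S u > 0"
  have "lz_len S u \<in> insert 0 ((\<lambda>s. min (lcp (drop s S) (drop u S)) (length S - u - 1)) ` {..<u})"
    unfolding lz_len_def lz_set_eq by (rule Max_in) auto
  with \<open>lz_len S u > 0\<close> show ?thesis by auto
qed

lemma lz_src_prop: "lz_len S u > 0 \<Longrightarrow> lz_src S u < u \<and> lz_len S u \<le> lcp (drop (lz_src S u) S) (drop u S)"
proof -
  assume a: "lz_len S u > 0"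
  then obtain s where s: "s < u \<and> lz_len S u \<le> lcp (drop s S) (drop u S)" using lz_len_ex[of S u] by auto
  have "(LEAST s. s < u \<and> lz_len S u \<le> lcp (drop s S) (drop u S)) < u \<and>
        lz_len S u \<le> lcp (drop (LEAST s. s < u \<and> lz_len S u \<le> lcp (drop s S) (drop u S)) S) (drop u S)"
    by (rule LeastI[of "\<lambda>s. s < u \<and> lz_len S u \<le> lcp (drop s S) (drop u S)", OF s])
  then show ?thesis unfolding lz_src_def using a by simp
qed

lemma lz_src_copy: "lz_len S u > 0 \<Longrightarrow> j < lz_len S u \<Longrightarrow>
   u + j < length S \<and> S ! (u + j) = S ! (lz_src S u + j)"
proof -
  assume a: "lz_len S u > 0" "j < lz_len S u"
  from lz_src_prop[OF a(1)] have "lz_len S u \<le> lcp (drop (lz_src S u) S) (drop u S)" by auto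
  then have "lz_len S u \<le> length (drop (lz_src S u) S)" "lz_len S u \<le> length (drop u S)"
    "take (lz_len S u) (drop (lz_src S u) S) = take (lz_len S u) (drop u S)"
    unfolding lcp_ge_iff by auto
  then have "take (lz_len S u) (drop (lz_src S u) S) ! j = take (lz_len S u) (drop u S) ! j" by simp
  then show ?thesis using a \<open>lz_len S u \<le> length (drop u S)\<close> \<open>lz_len S u \<le> length (drop (lz_src S u) S)\<close>
    by (simp add: add.commute)
qed

lemma lz_len_pos_len: "lz_len S u > 0 \<Longrightarrow> u + lz_len S u < length S"
  using lz_len_le[of S u] by auto

lemma copy_agree:
  assumes "take u A = take u B" "s < u \<or> l = 0"
    "\<And>i. i < l \<Longrightarrow> A ! (u + i) = A ! (s + i)"
    "\<And>i. i < l \<Longrightarrow> B ! (u + i) = B ! (s + i)"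
  shows "j < u + l \<Longrightarrow> A ! j = B ! j"
proof (induction j rule: less_induct)
  case (less j)
  show ?case
  proof (cases "j < u")
    case True
    then have "take u A ! j = take u B ! j" using assms(1) by simp
    then show ?thesis using True by simp
  next
    case False
    then obtain i where i: "j = u + i" "i < l" using less.prems by (metis add_diff_inverse_nat add_less_cancel_left)
    then have "s < u" using assms(2) by auto
    have "A ! j = A ! (s + i)" using assms(3) i by auto
    also have "\<dots> = B ! (s + i)" using less.IH[of "s+i"] i \<open>s < u\<close> by auto
    also have "\<dots> = B ! j" using assms(4) i by auto
    finally show ?thesis .
  qed
qed

lemma take_eqI: "n \<le> length A \<Longrightarrow> n \<le> length B \<Longrightarrow> (\<And>j. j < n \<Longrightarrow> A ! j = B ! j) \<Longrightarrow> take n A = take n B"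
  by (simp add: list_eq_iff_nth_eq)

lemma take_eq_nth: "take n A = take n B \<Longrightarrow> j < n \<Longrightarrow> A ! j = B ! j"
  by (metis nth_take)

lemma lz_prefix:
  assumes "take u A = take u B" "u \<le> length A" "u \<le> length B"
    "k \<le> lcp (lz_from A u) (lz_from B u)"
  shows "lz_pos A u k = lz_pos B u k \<and> take (lz_pos A u k) A = take (lz_pos A u k) B
    \<and> lz_pos A u k \<le> length A \<and> lz_pos A u k \<le> length B
    \<and> lcp (lz_from A u) (lz_from B u) = k + lcp (lz_from A (lz_pos A u k)) (lz_from B (lz_pos A u k))"
  using assms
proof (induction k arbitrary: u)
  case 0
  then show ?case by simp
next
  case (Suc k)
  have nA: "\<not> length A \<le> u"
  proof
    assume "length A \<le> u" then have "lz_from A u = []" by (subst lz_from.simps) auto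
    then show False using Suc.prems(4) by simp
  qed
  have nB: "\<not> length B \<le> u"
  proof
    assume "length B \<le> u" then have "lz_from B u = []" by (subst lz_from.simps) auto
    then show False using Suc.prems(4) by (simp add: lcp_comm)
  qed
  define l where "l = lz_len A u"
  have fA: "lz_from A u = (lz_src A u, lz_len A u, A ! (u + lz_len A u)) # lz_from A (u + lz_len A u + 1)"
    using nA by (subst lz_from.simps) auto
  have fB: "lz_from B u = (lz_src B u, lz_len B u, B ! (u + lz_len B u)) # lz_from B (u + lz_len B u + 1)"
    using nB by (subst lz_from.simps) auto
  have heq: "lz_src A u = lz_src B u \<and> lz_len A u = lz_len B u \<and> A ! (u + lz_len A u) = B ! (u + lz_len B u)"
  proof (rule ccontr)
    assume "\<not> ?thesis"
    then have "lcp (lz_from A u) (lz_from B u) = 0" unfolding fA fB by auto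
    then show False using Suc.prems(4) by simp
  qed
  have lA: "u + l < length A" using nA lz_len_le[of A u] unfolding l_def by auto
  have lB: "u + l < length B" using nB lz_len_le[of B u] heq unfolding l_def by auto
  have agree: "\<And>j. j < u + l \<Longrightarrow> A ! j = B ! j"
  proof (rule copy_agree[where s = "lz_src A u"])
    show "take u A = take u B" by fact
    show "lz_src A u < u \<or> l = 0" using lz_src_prop[of A u] unfolding l_def by auto
    show "A ! (u + i) = A ! (lz_src A u + i)" if "i < l" for i
      using lz_src_copy[of A u i] that unfolding l_def by auto
    show "B ! (u + i) = B ! (lz_src A u + i)" if "i < l" for i
      using lz_src_copy[of B u i] that heq unfolding l_def by auto
  qed
  define u' where "u' = u + l + 1"
  have al: "A ! (u + l) = B ! (u + l)" using heq unfolding l_def by metis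
  have agree': "take u' A = take u' B"
    unfolding u'_def using lA lB agree al
    by (intro take_eqI) (auto simp: less_Suc_eq)
  have lc: "lcp (lz_from A u) (lz_from B u) = Suc (lcp (lz_from A u') (lz_from B u'))"
  proof -
    have e1: "lz_len A u = lz_len B u" "lz_src A u = lz_src B u" using heq by auto
    have e2: "A ! (u + lz_len B u) = B ! (u + lz_len B u)" using heq by metis
    show ?thesis unfolding fA fB u'_def l_def e1 using e2 by simp
  qed
  have IH: "lz_pos A u' k = lz_pos B u' k \<and> take (lz_pos A u' k) A = take (lz_pos A u' k) B
    \<and> lz_pos A u' k \<le> length A \<and> lz_pos A u' k \<le> length B
    \<and> lcp (lz_from A u') (lz_from B u') = k + lcp (lz_from A (lz_pos A u' k)) (lz_from B (lz_pos A u' k))"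
    using Suc.IH[OF agree'] lA lB Suc.prems(4) lc unfolding u'_def by auto
  have q1: "lz_pos A u (Suc k) = lz_pos A u' k" unfolding u'_def l_def by simp
  have q2: "lz_pos B u (Suc k) = lz_pos A u' k" using IH unfolding u'_def l_def using heq by simp
  from IH have i2: "take (lz_pos A u' k) A = take (lz_pos A u' k) B"
    and i3: "lz_pos A u' k \<le> length A" and i4: "lz_pos A u' k \<le> length B"
    and i5: "lcp (lz_from A u') (lz_from B u') = k + lcp (lz_from A (lz_pos A u' k)) (lz_from B (lz_pos A u' k))"
    by auto
  show ?case unfolding q1 q2 using i2 i3 i4 i5 lc by simp
qed

lemma lz_common:
  fixes A B :: "'a list"
  defines "k \<equiv> lcp (lz77 A) (lz77 B)"
  defines "p \<equiv> lz_pos A 0 k"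
  shows "lz_pos B 0 k = p" "take p A = take p B" "p \<le> length A" "p \<le> length B"
    "\<not> (p < length A \<and> p < length B \<and> lz_src A p = lz_src B p \<and> lz_len A p = lz_len B p
          \<and> A ! (p + lz_len A p) = B ! (p + lz_len B p))"
proof -
  have P: "lz_pos A 0 k = lz_pos B 0 k \<and> take (lz_pos A 0 k) A = take (lz_pos A 0 k) B
    \<and> lz_pos A 0 k \<le> length A \<and> lz_pos A 0 k \<le> length B
    \<and> lcp (lz_from A 0) (lz_from B 0) = k + lcp (lz_from A (lz_pos A 0 k)) (lz_from B (lz_pos A 0 k))"
    by (rule lz_prefix) (auto simp: k_def lz77_def)
  then show "lz_pos B 0 k = p" "take p A = take p B" "p \<le> length A" "p \<le> length B"
    unfolding p_def by auto
  from P have "lcp (lz_from A 0) (lz_from B 0) = k + lcp (lz_from A p) (lz_from B p)" unfolding p_def by blast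
  then have z: "lcp (lz_from A p) (lz_from B p) = 0" unfolding k_def lz77_def by simp
  show "\<not> (p < length A \<and> p < length B \<and> lz_src A p = lz_src B p \<and> lz_len A p = lz_len B p
          \<and> A ! (p + lz_len A p) = B ! (p + lz_len B p))"
  proof
    assume h: "p < length A \<and> p < length B \<and> lz_src A p = lz_src B p \<and> lz_len A p = lz_len B p
          \<and> A ! (p + lz_len A p) = B ! (p + lz_len B p)"
    have "lz_from A p = (lz_src A p, lz_len A p, A ! (p + lz_len A p)) # lz_from A (p + lz_len A p + 1)"
      using h by (subst lz_from.simps) auto
    moreover have "lz_from B p = (lz_src B p, lz_len B p, B ! (p + lz_len B p)) # lz_from B (p + lz_len B p + 1)"
      using h by (subst lz_from.simps) auto
    moreover have e2: "A ! (p + lz_len B p) = B ! (p + lz_len B p)" using h by metis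
    ultimately show False using z h by simp
  qed
qed

function cpy :: "'a list \<Rightarrow> nat \<Rightarrow> nat \<Rightarrow> 'a" where
  "cpy X s j = (if length X \<le> s then undefined else if s + j < length X then X ! (s + j)
                else cpy X s (s + j - length X))"
  by pat_completeness auto
termination by (relation "Wellfounded.measure (\<lambda>(X, s, j). j)") auto
declare cpy.simps[simp del]

lemma lz_copy_cpy:
  assumes "lz_len S p > 0" "j < lz_len S p"
  shows "S ! (p + j) = cpy (take p S) (lz_src S p) j"
  using assms(2)
proof (induction j rule: less_induct)
  case (less j)
  have sp: "lz_src S p < p" using lz_src_prop[OF assms(1)] by auto
  have pl: "p + lz_len S p < length S" using lz_len_pos_len[OF assms(1)] .
  have lt: "length (take p S) = p" using pl by simp
  have e: "S ! (p + j) = S ! (lz_src S p + j)" using lz_src_copy[OF assms(1) less.prems] by auto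
  show ?case
  proof (cases "lz_src S p + j < p")
    case True
    then show ?thesis using e sp lt by (subst cpy.simps) simp
  next
    case False
    define j' where "j' = lz_src S p + j - p"
    have j'': "j' < j" "lz_src S p + j = p + j'" using False sp unfolding j'_def by auto
    have "cpy (take p S) (lz_src S p) j = cpy (take p S) (lz_src S p) j'"
      using False sp lt unfolding j'_def by (subst cpy.simps) simp
    also have "\<dots> = S ! (p + j')" using less.IH[of j'] j'' less.prems by auto
    finally show ?thesis using e j'' by simp
  qed
qed

lemma lcp_cap:
  assumes "s \<le> p" "take (p + c) A = take (p + c) B"
  shows "min (lcp (drop s A) (drop p A)) c = min (lcp (drop s B) (drop p B)) c"
proof -
  have t: "take c (drop m A) = take c (drop m B)" if "m \<le> p" for m
  proof -
    have "take (m + c) A = take (m + c) (take (p + c) A)" using that by (simp add: min_def)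
    also have "\<dots> = take (m + c) B" using assms(2) that by (simp add: min_def)
    finally show ?thesis by (simp add: take_drop add.commute)
  qed
  have "min (lcp (drop s A) (drop p A)) c = lcp (take c (drop s A)) (take c (drop p A))"
    by (simp add: lcp_take)
  also have "\<dots> = lcp (take c (drop s B)) (take c (drop p B))" using t assms(1) by simp
  also have "\<dots> = min (lcp (drop s B) (drop p B)) c" by (simp add: lcp_take)
  finally show ?thesis .
qed

lemma src_eq:
  assumes "lz_len A p = l" "lz_len B p = l" "take (p + l) A = take (p + l) B"
  shows "lz_src A p = lz_src B p"
proof -
  have "(s < p \<and> l \<le> lcp (drop s A) (drop p A)) \<longleftrightarrow> (s < p \<and> l \<le> lcp (drop s B) (drop p B))" for s
  proof -
    have "s < p \<Longrightarrow> min (lcp (drop s A) (drop p A)) l = min (lcp (drop s B) (drop p B)) l"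
      by (rule lcp_cap) (use assms in auto)
    then show ?thesis by (auto simp: min_def split: if_splits)
  qed
  then show ?thesis unfolding lz_src_def using assms by simp
qed

lemma extend_eq:
  assumes "lz_len A p = l" "take (p + l + 2) A = take (p + l + 2) B"
    "p + l + 2 \<le> length A" "p + l + 2 \<le> length B"
  shows "lz_len B p = l \<and> lz_src B p = lz_src A p"
proof -
  have eqs: "lcp (drop s B) (drop p B) = lcp (drop s A) (drop p A) \<and> lcp (drop s A) (drop p A) \<le> l"
    if "s < p" for s
  proof -
    have "min (lcp (drop s A) (drop p A)) (length A - p - 1) \<le> l"
      using lz_len_ge[OF that, of A] assms(1) by simp
    then have le: "lcp (drop s A) (drop p A) \<le> l" using assms(3) by (auto simp: min_def split: if_splits)
    have tk: "take (p + (l + 1)) A = take (p + (l+1)) B"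
    proof -
      have "take (p + (l + 1)) A = take (p + (l + 1)) (take (p + l + 2) A)" by (simp add: min_def)
      also have "\<dots> = take (p + (l + 1)) B" using assms(2) by (simp add: min_def)
      finally show ?thesis .
    qed
    have "min (lcp (drop s A) (drop p A)) (l + 1) = min (lcp (drop s B) (drop p B)) (l + 1)"
      by (rule lcp_cap) (use tk that in auto)
    then show ?thesis using le by (auto simp: min_def split: if_splits)
  qed
  have set_eq: "(\<lambda>s. min (lcp (drop s B) (drop p B)) (length B - p - 1)) ` {..<p}
      = (\<lambda>s. min (lcp (drop s A) (drop p A)) (length A - p - 1)) ` {..<p}"
  proof -
    have "min (lcp (drop s B) (drop p B)) (length B - p - 1) = min (lcp (drop s A) (drop p A)) (length A - p - 1)"
      if "s < p" for s
    proof -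
      have e1: "lcp (drop s B) (drop p B) = lcp (drop s A) (drop p A)" and e2: "lcp (drop s A) (drop p A) \<le> l"
        using eqs[OF that] by auto
      have "l \<le> length B - p - 1" "l \<le> length A - p - 1" using assms(3,4) by simp_all
      then have "lcp (drop s A) (drop p A) \<le> length B - p - 1" "lcp (drop s A) (drop p A) \<le> length A - p - 1"
        using e2 by simp_all
      then show ?thesis unfolding e1 by (simp add: min_absorb1)
    qed
    then show ?thesis by (intro image_cong) auto
  qed
  have ll: "lz_len B p = l" unfolding lz_len_def lz_set_eq set_eq using assms(1) unfolding lz_len_def lz_set_eq .
  have "take (p + l) A = take (p + l) B"
  proof -
    have "take (p + l) A = take (p + l) (take (p + l + 2) A)" by (simp add: min_def)
    also have "\<dots> = take (p + l) B" using assms(2) by (simp add: min_def)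
    finally show ?thesis .
  qed
  then have "lz_src A p = lz_src B p" using src_eq[OF assms(1) ll] by simp
  then show ?thesis using ll by simp
qed

definition pp :: "'a list \<Rightarrow> nat \<Rightarrow> nat" where "pp S k = lz_pos S 0 k"
definition ss :: "'a list \<Rightarrow> nat \<Rightarrow> nat" where "ss S k = lz_src S (pp S k)"
definition ll :: "'a list \<Rightarrow> nat \<Rightarrow> nat" where "ll S k = lz_len S (pp S k)"
definition av :: "'a list \<Rightarrow> nat \<Rightarrow> nat \<Rightarrow> nat" where
  "av S k so = (LEAST j. j = ll S k \<or> cpy (take (pp S k) S) (ss S k) j \<noteq> cpy (take (pp S k) S) so j)"
definition evq :: "'a list \<Rightarrow> nat \<Rightarrow> nat \<Rightarrow> nat \<Rightarrow> bool" where
  "evq S k so q = (pp S k + q < length S \<and> S ! (pp S k + q) = cpy (take (pp S k) S) so q)"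

lemma core:
  fixes A B :: "'a list"
  defines "k \<equiv> lcp (lz77 A) (lz77 B)"
  defines "q \<equiv> min (av A k (ss B k)) (av B k (ss A k))"
  defines "\<epsilon> \<equiv> (pp A k + q < length A \<and> pp A k + q < length B \<and> A ! (pp A k + q) = B ! (pp A k + q))"
  shows "lcp A B = pp A k + q + (if \<epsilon> then 1 else 0)"
    "q < ll B k \<Longrightarrow> \<epsilon> = evq A k (ss B k) q"
    "q = ll A k \<Longrightarrow> q = ll B k \<Longrightarrow> \<not> \<epsilon>"
    "pp B k = pp A k" "ss A k \<le> pp A k" "av A k (ss B k) \<le> ll A k" "ll A k \<le> length A"
    "q \<le> ll A k" "q \<le> ll B k"
proof -
  define p where "p = pp A k"
  define sA where "sA = ss A k"
  define sB where "sB = ss B k"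
  define lA where "lA = ll A k"
  define lB where "lB = ll B k"
  define a where "a = av A k sB"
  define b where "b = av B k sA"
  define X where "X = take p A"
  note C = lz_common[where A=A and B=B, folded k_def]
  have pB: "pp B k = p" using C(1) unfolding pp_def p_def by simp
  have tp: "take p A = take p B" using C(2) unfolding p_def pp_def .
  have pA: "p \<le> length A" "p \<le> length B" using C(3,4) unfolding p_def pp_def by auto
  have XB: "X = take p B" using tp X_def by simp
  have hd: "\<not> (p < length A \<and> p < length B \<and> lz_src A p = lz_src B p \<and> lz_len A p = lz_len B p
          \<and> A ! (p + lz_len A p) = B ! (p + lz_len B p))" using C(5) unfolding p_def pp_def .
  have lAd: "lA = lz_len A p" unfolding lA_def ll_def p_def ..
  have lBd: "lB = lz_len B p" unfolding lB_def ll_def pB[symmetric] ..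
  have sAd: "sA = lz_src A p" unfolding sA_def ss_def p_def ..
  have sBd: "sB = lz_src B p" unfolding sB_def ss_def pB[symmetric] ..
  have cA: "A ! (p + j) = cpy X sA j" if "j < lA" for j
    using lz_copy_cpy[of A p j] that unfolding lAd sAd X_def by auto
  have cB: "B ! (p + j) = cpy X sB j" if "j < lB" for j
    using lz_copy_cpy[of B p j] that unfolding lBd sBd XB by auto
  have lenA: "lA > 0 \<Longrightarrow> p + lA < length A" unfolding lAd by (rule lz_len_pos_len)
  have lenB: "lB > 0 \<Longrightarrow> p + lB < length B" unfolding lBd by (rule lz_len_pos_len)
  have ad: "a = (LEAST j. j = lA \<or> cpy X sA j \<noteq> cpy X sB j)"
    unfolding a_def av_def lA_def X_def p_def sA_def ..
  have bd: "b = (LEAST j. j = lB \<or> cpy X sB j \<noteq> cpy X sA j)"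
    unfolding b_def av_def lB_def XB pB sB_def ..
  have ale: "a \<le> lA" unfolding ad by (rule Least_le) simp
  have ble: "b \<le> lB" unfolding bd by (rule Least_le) simp
  have alt: "j < a \<Longrightarrow> cpy X sA j = cpy X sB j" for j unfolding ad using not_less_Least by blast
  have blt: "j < b \<Longrightarrow> cpy X sB j = cpy X sA j" for j unfolding bd using not_less_Least by blast
  have aL: "a = lA \<or> cpy X sA a \<noteq> cpy X sB a" unfolding ad by (rule LeastI[of _ lA]) simp
  have bL: "b = lB \<or> cpy X sB b \<noteq> cpy X sA b" unfolding bd by (rule LeastI[of _ lB]) simp
  have qd: "q = min a b" unfolding q_def a_def b_def sA_def sB_def ..
  have qlen: "p + q \<le> length A" "p + q \<le> length B"
    using lenA lenB pA ale ble qd by (cases "q = 0"; force)+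
  have tq: "take (p + q) A = take (p + q) B"
  proof (rule take_eqI[OF qlen])
    fix j assume j: "j < p + q"
    show "A ! j = B ! j"
    proof (cases "j < p")
      case True then show ?thesis using take_eq_nth[OF tp] by simp
    next
      case False
      then obtain i where i: "j = p + i" "i < q" using j by (metis add_diff_inverse_nat add_less_cancel_left)
      then show ?thesis using cA[of i] cB[of i] alt[of i] ale ble qd by auto
    qed
  qed
  have epsd: "\<epsilon> = (p + q < length A \<and> p + q < length B \<and> A ! (p + q) = B ! (p + q))"
    unfolding \<epsilon>_def p_def ..
  have ge1: "p + q + 1 \<le> lcp A B \<longleftrightarrow> \<epsilon>"
  proof -
    have "p + q + 1 \<le> lcp A B \<longleftrightarrow> (p + q < length A \<and> p + q < length B \<and> take (Suc (p + q)) A = take (Suc (p + q)) B)"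
      unfolding lcp_ge_iff by auto
    also have "\<dots> \<longleftrightarrow> \<epsilon>" unfolding epsd using tq by (auto simp: take_Suc_conv_app_nth)
    finally show ?thesis .
  qed
  have ge0: "p + q \<le> lcp A B" unfolding lcp_ge_iff using qlen tq by auto
  have ge2: "\<not> p + q + 2 \<le> lcp A B"
  proof
    assume h: "p + q + 2 \<le> lcp A B"
    then have t2: "take (p + q + 2) A = take (p + q + 2) B" "p + q + 2 \<le> length A" "p + q + 2 \<le> length B"
      unfolding lcp_ge_iff by auto
    have eq: "A ! (p + q) = B ! (p + q)" using take_eq_nth[OF t2(1), of "p+q"] by simp
    consider "q < lA \<and> q < lB" | "q = lA" | "q = lB" using ale ble qd by linarith
    then show False
    proof cases
      case 1
      have "cpy X sA q \<noteq> cpy X sB q"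
      proof (cases "q = a")
        case True then show ?thesis using aL 1 by auto
      next
        case False then have "q = b" using qd by auto
        then show ?thesis using bL 1 by auto
      qed
      then show False using cA[of q] cB[of q] 1 eq by auto
    next
      case 2
      have "lz_len B p = lA \<and> lz_src B p = lz_src A p"
        by (rule extend_eq) (use t2 2 lAd in auto)
      then show False using hd t2 2 eq lAd by auto
    next
      case 3
      have t2': "take (p + q + 2) B = take (p + q + 2) A" using t2 by simp
      have "lz_len A p = lB \<and> lz_src A p = lz_src B p"
        by (rule extend_eq) (use t2' t2 3 lBd in auto)
      then show False using hd t2 3 eq lBd by auto
    qed
  qed
  show "lcp A B = pp A k + q + (if \<epsilon> then 1 else 0)"
    using ge0 ge1 ge2 unfolding p_def[symmetric] by (cases \<epsilon>) auto
  show "q < ll B k \<Longrightarrow> \<epsilon> = evq A k (ss B k) q"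
  proof -
    assume "q < ll B k"
    then have "q < lB" unfolding lB_def .
    then have "B ! (p + q) = cpy X sB q" "p + q < length B" using cB lenB by auto
    then show ?thesis unfolding epsd evq_def p_def[symmetric] X_def[symmetric] sB_def[symmetric] by auto
  qed
  show "q = ll A k \<Longrightarrow> q = ll B k \<Longrightarrow> \<not> \<epsilon>"
  proof
    assume h: "q = ll A k" "q = ll B k" "\<epsilon>"
    then have t1: "take (p + q + 1) A = take (p + q + 1) B" using ge1 unfolding lcp_ge_iff by auto
    have "take (p + q) A = take (p + q) B" by (fact tq)
    have "lz_src A p = lz_src B p"
      by (rule src_eq[where l = q]) (use h lAd lBd lA_def lB_def tq in auto)
    then show False using hd h epsd lAd lBd lA_def lB_def by auto
  qed
  show "pp B k = pp A k" using pB p_def by simp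
  show "ss A k \<le> pp A k"
    using lz_src_prop[of A p] unfolding sAd[symmetric] sA_def p_def ss_def lz_src_def by (auto split: if_splits)
  show "av A k (ss B k) \<le> ll A k" using ale a_def sB_def lA_def by simp
  show "ll A k \<le> length A" using lz_len_le[of A p] lAd lA_def by simp
  show "q \<le> ll A k" "q \<le> ll B k" using ale ble qd lA_def lB_def by auto
qed

lemma lg_ge1: "1 \<le> lg x"
  unfolding lg_def by simp

lemma lg_mono: "x \<le> y \<Longrightarrow> lg x \<le> lg y"
  unfolding lg_def by (rule log_mono) auto

lemma log2_le_lg: "0 < x \<Longrightarrow> log 2 x \<le> lg x"
  unfolding lg_def by (rule log_mono) auto

lemma binlen_lg: "real (length (bin n)) \<le> 1 + lg (real n)"
proof (cases "n = 0")
  case True then show ?thesis using lg_ge1[of 0] by (simp add: bin.simps)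
next
  case False
  then have "2 ^ (length (bin n) - 1) \<le> n" by (intro bin_ge) auto
  then have "real (length (bin n) - 1) \<le> log 2 (real n)" by (rule le_log2_of_power)
  moreover have "log 2 (real n) \<le> lg (real n)" using False by (intro log2_le_lg) auto
  ultimately show ?thesis by linarith
qed

lemma pow_le_log: "2 ^ j \<le> (y::real) \<Longrightarrow> real j \<le> log 2 y"
proof -
  assume h: "2 ^ j \<le> y"
  have "y > 0" using h by (smt (verit) zero_less_power)
  have "log 2 (2 ^ j) \<le> log 2 y" by (rule log_mono) (use h in auto)
  then show ?thesis by (simp add: log_pow_cancel)
qed

lemma binlen_le_L: "m \<le> L \<Longrightarrow> real (length (bin m)) \<le> 1 + lg (real L)"
  using bin_mono[of m L] binlen_lg[of L] by linarith

definition qv :: "'a list \<Rightarrow> 'a list \<Rightarrow> nat \<Rightarrow> nat" where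
  "qv U V k = min (av U k (ss V k)) (av V k (ss U k))"

definition tailmsg :: "'a list \<Rightarrow> nat \<Rightarrow> bool list list \<Rightarrow> nat \<Rightarrow> bool list" where
  "tailmsg S k t f = (let n = length t; so = unbin (t ! (if even n then 1 else 0)); q = unbin (t ! (f + 1)) in
     if n - f = 1 then bin (min (av S k so) (unbin (tl (t ! f))))
     else if n - f = 2 then [q < ll S k]
     else if n - f = 3 then (if t ! (f + 2) = [True] then [evq S k so q] else if q < ll S k then [] else [False])
     else (if t ! (f + 3) = [] then [evq S k so q] else t ! (f + 3)))"

definition outp :: "'a list \<Rightarrow> nat \<Rightarrow> bool list list \<Rightarrow> nat \<Rightarrow> nat" where
  "outp S k t f = pp S k + unbin (t ! (f + 1)) + (if t ! (f + 4) = [True] then 1 else 0)"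

definition m3 :: "'a list \<Rightarrow> 'a list \<Rightarrow> nat \<Rightarrow> bool list" where
  "m3 U V k = (if qv U V k < ll U k then [evq V k (ss U k) (qv U V k)]
               else if qv U V k < ll V k then [] else [False])"

definition tailmsgs :: "'a list \<Rightarrow> 'a list \<Rightarrow> nat \<Rightarrow> nat \<Rightarrow> bool list list" where
  "tailmsgs U V k v = [True # bin v, bin (qv U V k), [qv U V k < ll U k], m3 U V k,
     if m3 U V k = [] then [evq U k (ss V k) (qv U V k)] else m3 U V k]"

lemma tail_ok:
  fixes U V :: "'a list"
  assumes k: "k = lcp (lz77 U) (lz77 V)"
    and f: "length t0 = f" "2 \<le> f"
    and so: "\<And>n. f \<le> n \<Longrightarrow> unbin (t0 ! (if even n then 1 else 0)) = ss (if even (n - f) then V else U) k"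
    and v: "min v (av V k (ss U k)) = qv U V k"
    and n: "f < n" "n < f + 5"
  shows "tailmsg (if even (n - f) then U else V) k (take n (t0 @ tailmsgs U V k v)) f
           = (t0 @ tailmsgs U V k v) ! n"
proof -
  define tr where "tr = t0 @ tailmsgs U V k v"
  define q where "q = qv U V k"
  have lt: "length (take n tr) = n" using n f unfolding tr_def tailmsgs_def by auto
  have nth: "take n tr ! i = tr ! i" if "i < n" for i using that by simp
  have tri: "tr ! (f + i) = tailmsgs U V k v ! i" for i unfolding tr_def using f by (simp add: nth_append)
  have soi: "take n tr ! (if even n then 1 else 0) = t0 ! (if even n then 1 else 0)"
    using n f unfolding tr_def by (auto simp: nth_append)
  have so': "unbin (take n tr ! (if even n then 1 else 0)) = ss (if even (n - f) then V else U) k"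
    using soi so[of n] n by simp
  have trs: "tr ! f = True # bin v" "tr ! Suc f = bin (qv U V k)" "tr ! Suc (Suc f) = [qv U V k < ll U k]"
    "tr ! Suc (Suc (Suc f)) = m3 U V k"
    "tr ! Suc (Suc (Suc (Suc f))) = (if m3 U V k = [] then [evq U k (ss V k) (qv U V k)] else m3 U V k)"
    using f by (simp_all add: tr_def nth_append tailmsgs_def)
  consider "n = f + 1" | "n = f + 2" | "n = f + 3" | "n = f + 4" using n by linarith
  then show ?thesis
  proof cases
    case 1
    have "even (n - f) = False" using 1 by simp
    have a1: "tr ! f = True # bin v" "tr ! Suc f = bin (qv U V k)"
      using tri[of 0] tri[of 1] by (simp_all add: tailmsgs_def)
    then show ?thesis unfolding tr_def[symmetric] tailmsg_def Let_def lt so' using 1 v \<open>even (n - f) = False\<close>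
      by (simp add: nth a1 min.commute)
  next
    case 2
    have "even (n - f)" using 2 by simp
    then show ?thesis unfolding tr_def[symmetric] tailmsg_def Let_def lt so' using 2
      by (simp add: nth trs numeral_2_eq_2)
  next
    case 3
    have "even (n - f) = False" using 3 by simp
    then show ?thesis unfolding tr_def[symmetric] tailmsg_def Let_def lt so' using 3
      by (simp add: nth trs numeral_3_eq_3 numeral_2_eq_2 m3_def)
  next
    case 4
    have "even (n - f)" using 4 by simp
    have e: "n - f = 4" using 4 by simp
    show ?thesis unfolding tr_def[symmetric] tailmsg_def Let_def lt so' e using 4 \<open>even (n - f)\<close>
      by (simp add: nth trs eval_nat_numeral)
  qed
qed

lemma tail_out:
  fixes U V :: "'a list"
  assumes k: "k = lcp (lz77 U) (lz77 V)" and f: "length t0 = f"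
  shows "outp U k (t0 @ tailmsgs U V k v) f = lcp U V"
    "outp V k (t0 @ tailmsgs U V k v) f = lcp U V"
proof -
  define q where "q = qv U V k"
  have k': "k = lcp (lz77 V) (lz77 U)" using k lcp_comm by metis
  note C1 = core[where A=U and B=V, folded k]
  note C2 = core[where A=V and B=U, folded k']
  have q1: "min (av U k (ss V k)) (av V k (ss U k)) = q" unfolding q_def qv_def ..
  have q2: "min (av V k (ss U k)) (av U k (ss V k)) = q" unfolding q_def qv_def by (simp add: min.commute)
  note C1 = C1[unfolded q1] and C2 = C2[unfolded q2]
  define \<epsilon> where "\<epsilon> = (pp U k + q < length U \<and> pp U k + q < length V \<and> U ! (pp U k + q) = V ! (pp U k + q))"
  have ppe: "pp V k = pp U k" by (rule C1(4))
  have e2: "(pp V k + q < length V \<and> pp V k + q < length U \<and> V ! (pp V k + q) = U ! (pp V k + q)) = \<epsilon>"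
    unfolding \<epsilon>_def ppe by auto
  note C2 = C2[unfolded e2]
  have L: "lcp U V = pp U k + q + (if \<epsilon> then 1 else 0)" using C1(1) unfolding \<epsilon>_def .
  have last: "(tailmsgs U V k v ! 4 = [True]) = \<epsilon>"
  proof -
    consider "q < ll U k" | "\<not> q < ll U k" "q < ll V k" | "q = ll U k" "q = ll V k"
      using C1(8,9) by linarith
    then show ?thesis
    proof cases
      case 1
      have "\<epsilon> = evq V k (ss U k) q" using C2(2) 1 by simp
      then show ?thesis using 1 unfolding tailmsgs_def m3_def q_def[symmetric] by simp
    next
      case 2
      have "\<epsilon> = evq U k (ss V k) q" using C1(2) 2 unfolding \<epsilon>_def by simp
      then show ?thesis using 2 unfolding tailmsgs_def m3_def q_def[symmetric] by simp
    next
      case 3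
      have "\<not> \<epsilon>" using C1(3) 3 unfolding \<epsilon>_def by simp
      then show ?thesis using 3 unfolding tailmsgs_def m3_def q_def[symmetric] by simp
    qed
  qed
  have t4: "(t0 @ tailmsgs U V k v) ! (f + 4) = tailmsgs U V k v ! 4" using f by (simp add: nth_append)
  have t1: "(t0 @ tailmsgs U V k v) ! (f + 1) = bin q" using f by (simp add: nth_append tailmsgs_def q_def)
  show "outp U k (t0 @ tailmsgs U V k v) f = lcp U V"
    unfolding outp_def t4 t1 last L by simp
  show "outp V k (t0 @ tailmsgs U V k v) f = lcp U V"
    unfolding outp_def t4 t1 last L ppe by simp
qed

lemma tail_cost: "comm_cost (tailmsgs U V k v) \<le> length (bin v) + length (bin (qv U V k)) + 9"
  unfolding tailmsgs_def comm_cost_def m3_def by auto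

lemma comm_cost_append: "comm_cost (xs @ ys) = comm_cost xs + comm_cost ys"
  unfolding comm_cost_def by simp

lemma transcript_eq:
  assumes "\<And>n. n < length tr \<Longrightarrow> (if even n then msgA P A k r (take n tr) else msgB P B k r (take n tr)) = tr ! n"
  shows "n \<le> length tr \<Longrightarrow> transcript P A B k r n = take n tr"
proof (induction n)
  case 0 then show ?case by simp
next
  case (Suc n)
  then have "transcript P A B k r n = take n tr" by simp
  moreover have "take (Suc n) tr = take n tr @ [tr ! n]" using Suc.prems by (simp add: take_Suc_conv_app_nth)
  ultimately show ?case using assms[of n] Suc.prems by (simp add: Let_def)
qed

lemma bin_lt_pow: "length (bin x) \<le> m \<Longrightarrow> x < 2 ^ m"
proof -
  assume "length (bin x) \<le> m"
  then have "(2::nat) ^ length (bin x) \<le> 2 ^ m" by (rule power_increasing) simp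
  then show ?thesis using bin_lt[of x] by linarith
qed

definition ilev :: "nat \<Rightarrow> nat" where "ilev v = (LEAST i. length (bin v) \<le> 2 ^ i)"

lemma ilev_ok: "length (bin v) \<le> 2 ^ ilev v"
  unfolding ilev_def by (rule LeastI[of _ "length (bin v)"]) (simp add: less_imp_le)

lemma ilev_min: "i < ilev v \<Longrightarrow> 2 ^ i < length (bin v)"
  unfolding ilev_def using not_less_Least by (metis not_le)

lemma lg_lg_aux: "(x::real) \<ge> 1 \<Longrightarrow> lg (3 * x) \<le> 2 + lg x"
proof -
  assume x: "x \<ge> 1"
  have "lg (3 * x) = log 2 (3 * x)" unfolding lg_def using x by (simp add: max_def)
  also have "\<dots> = log 2 3 + log 2 x" using x by (simp add: log_mult)
  also have "log 2 3 \<le> (2::real)"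
  proof -
    have "log 2 3 \<le> log 2 (4::real)" by (rule log_mono) auto
    also have "log 2 (4::real) = 2" using log_pow_cancel[of 2 2] by simp
    finally show ?thesis .
  qed
  moreover have "log 2 x \<le> lg x" using x by (intro log2_le_lg) auto
  ultimately show ?thesis by linarith
qed

lemma lg_double: "(x::real) \<ge> 1 \<Longrightarrow> log 2 (2 * x) \<le> 1 + lg x"
proof -
  assume x: "x \<ge> 1"
  have "log 2 (2 * x) = 1 + log 2 x" using x by (simp add: log_mult)
  moreover have "log 2 x \<le> lg x" using x by (intro log2_le_lg) auto
  ultimately show ?thesis by linarith
qed

lemma ilev_bound:
  assumes "v \<le> N"
  shows "real (length (bin (ilev v))) \<le> 3 + lg (lg (lg (real N)))"
proof (cases "ilev v = 0")
  case True
  then show ?thesis using lg_ge1[of "lg (lg (real N))"] by (simp add: bin.simps)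
next
  case False
  define i where "i = ilev v"
  have "2 ^ (i - 1) < length (bin v)" using ilev_min[of "i - 1" v] False unfolding i_def by simp
  moreover have "real (length (bin v)) \<le> 1 + lg (real N)" by (rule binlen_le_L[OF assms])
  ultimately have "(2::real) ^ (i - 1) < real (length (bin v))"
    by (metis of_nat_less_iff of_nat_numeral of_nat_power)
  then have "(2::real) ^ (i - 1) \<le> 2 * lg (real N)" using lg_ge1[of "real N"] \<open>real (length (bin v)) \<le> 1 + lg (real N)\<close>
    by linarith
  then have "real (i - 1) \<le> log 2 (2 * lg (real N))" by (rule pow_le_log)
  also have "\<dots> \<le> 1 + lg (lg (real N))" by (rule lg_double[OF lg_ge1])
  finally have "real i \<le> 3 * lg (lg (real N))" using False lg_ge1[of "lg (real N)"] unfolding i_def by linarith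
  then have "lg (real i) \<le> lg (3 * lg (lg (real N)))" by (rule lg_mono)
  also have "\<dots> \<le> 2 + lg (lg (lg (real N)))" by (rule lg_lg_aux[OF lg_ge1])
  finally show ?thesis using binlen_lg[of i] unfolding i_def by linarith
qed

definition step2 :: "'a list \<Rightarrow> nat \<Rightarrow> bool list list \<Rightarrow> bool list" where
  "step2 S k t = (let n = length t; so = unbin (t ! (if even n then 1 else 0)); a = av S k so in
     if n < 2 then bin (ss S k)
     else if n = 2 then bin (ilev a)
     else if n = 3 then bin (min (ilev a) (unbin (t ! 2)))
     else if n = 4 then True # bin (min a (2 ^ (2 ^ unbin (t ! 3)) - 1))
     else tailmsg S k t 4)"

definition P2 :: "'a protocol" where
  "P2 = \<lparr>msgA = (\<lambda>x k r t. step2 x k t), msgB = (\<lambda>x k r t. step2 x k t),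
         halt = (\<lambda>k r t. length t = 9), outA = (\<lambda>x k r t. outp x k t 4), outB = (\<lambda>x k r t. outp x k t 4)\<rparr>"

lemma P2_ok:
  fixes A B :: "'a list"
  defines "k \<equiv> lcp (lz77 A) (lz77 B)"
  shows "good_run P2 A B k r 100 (100 * (1 + lg (real (lcp A B)) + lg (lg (lg (real (length A)))))) (lcp A B)"
proof -
  have kk: "k = lcp (lz77 A) (lz77 B)" unfolding k_def ..
  define sA where "sA = ss A k"
  define sB where "sB = ss B k"
  define aA where "aA = av A k sB"
  define aB where "aB = av B k sA"
  define iA where "iA = ilev aA"
  define iB where "iB = ilev aB"
  define ist where "ist = min iB iA"
  define v where "v = min aA (2 ^ (2 ^ ist) - 1)"
  define t0 where "t0 = [bin sA, bin sB, bin iA, bin ist]"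
  define tr where "tr = t0 @ tailmsgs A B k v"
  define q where "q = qv A B k"
  have qd: "q = min aA aB" unfolding q_def qv_def aA_def aB_def sA_def sB_def ..
  have lt0: "length t0 = 4" unfolding t0_def by simp
  have ltr: "length tr = 9" unfolding tr_def t0_def tailmsgs_def by simp
  have vq: "min v aB = q"
  proof (cases "iA \<le> iB")
    case True
    then have "ist = iA" unfolding ist_def by simp
    have "aA < 2 ^ (2 ^ ist)" using bin_lt[of aA] ilev_ok[of aA] unfolding \<open>ist = iA\<close> iA_def
      by (intro bin_lt_pow) simp
    then have "v = aA" unfolding v_def by simp
    then show ?thesis using qd by simp
  next
    case False
    then have "ist = iB" unfolding ist_def by simp
    have "aB < 2 ^ (2 ^ ist)" using bin_lt[of aB] ilev_ok[of aB] unfolding \<open>ist = iB\<close> iB_def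
      by (intro bin_lt_pow) simp
    then show ?thesis unfolding v_def qd by linarith
  qed
  have steps: "(if even n then msgA P2 A k r (take n tr) else msgB P2 B k r (take n tr)) = tr ! n"
    if n: "n < length tr" for n
  proof -
    consider "n = 0" | "n = 1" | "n = 2" | "n = 3" | "n = 4" | "4 < n" "n < 4 + 5" using n ltr by linarith
    then show ?thesis
    proof cases
      case 1 then show ?thesis unfolding P2_def by (simp add: step2_def tr_def t0_def sA_def)
    next
      case 2 then show ?thesis unfolding P2_def by (simp add: step2_def tr_def t0_def sB_def)
    next
      case 3 then show ?thesis unfolding P2_def
        by (simp add: step2_def tr_def t0_def iA_def aA_def sB_def)
    next
      case 4 then show ?thesis unfolding P2_def
        by (simp add: step2_def tr_def t0_def iB_def aB_def sA_def ist_def iA_def aA_def sB_def)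
    next
      case 5 then show ?thesis unfolding P2_def
        by (simp add: step2_def tr_def t0_def iB_def aA_def sB_def ist_def v_def tailmsgs_def)
    next
      case 6
      have tl: "tailmsg (if even (n - 4) then A else B) k (take n (t0 @ tailmsgs A B k v)) 4
           = (t0 @ tailmsgs A B k v) ! n"
      proof (rule tail_ok[OF kk lt0])
        show "unbin (t0 ! (if even m then 1 else 0)) = ss (if even (m - 4) then B else A) k" if "4 \<le> m" for m :: nat
          using that unfolding t0_def sA_def sB_def by (auto simp: even_diff_nat)
        show "min v (av B k (ss A k)) = qv A B k" using vq unfolding aB_def sA_def q_def .
      qed (use 6 in auto)
      have ev4: "even (n - 4) = even n" using 6 by (simp add: even_diff_nat)
      have st: "step2 S k (take n tr) = tailmsg S k (take n tr) 4" for S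
        using 6 ltr unfolding step2_def Let_def by simp
      have tl': "tailmsg (if even n then A else B) k (take n tr) 4 = tr ! n"
        using tl[folded tr_def] unfolding ev4 .
      show ?thesis using tl' unfolding P2_def by (cases "even n") (simp_all add: st)
    qed
  qed
  have T: "m \<le> 9 \<Longrightarrow> transcript P2 A B k r m = take m tr" for m
    using transcript_eq[of tr P2 A k r B m, OF steps] ltr by simp
  have L: "outp A k tr 4 = lcp A B" "outp B k tr 4 = lcp A B"
    using tail_out[OF kk lt0] unfolding tr_def by auto
  note C = core[where A=A and B=B, folded k_def]
  have Lq: "lcp A B = pp A k + q + (if (pp A k + q < length A \<and> pp A k + q < length B \<and> A ! (pp A k + q) = B ! (pp A k + q)) then 1 else 0)"
    using C(1) unfolding q_def qv_def .
  have sAL: "sA \<le> lcp A B" using C(5) Lq unfolding sA_def by linarith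
  have kk': "k = lcp (lz77 B) (lz77 A)" using kk lcp_comm by metis
  have "ss B k \<le> pp B k" using core(5)[where A=B and B=A, folded kk'] .
  then have sBL: "sB \<le> lcp A B" using C(4) Lq unfolding sB_def by linarith
  have qL: "q \<le> lcp A B" using Lq by linarith
  have aAl: "aA \<le> length A" using C(6,7) unfolding aA_def sB_def by linarith
  define W where "W = 1 + lg (real (lcp A B))"
  have W1: "W \<ge> 2" unfolding W_def using lg_ge1 by smt
  have bsA: "real (length (bin sA)) \<le> W" using binlen_le_L[OF sAL] unfolding W_def .
  have bsB: "real (length (bin sB)) \<le> W" using binlen_le_L[OF sBL] unfolding W_def .
  have bq: "real (length (bin q)) \<le> W" using binlen_le_L[OF qL] unfolding W_def .
  define G where "G = 3 + lg (lg (lg (real (length A))))"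
  have biA: "real (length (bin iA)) \<le> G" unfolding G_def iA_def by (rule ilev_bound[OF aAl])
  have bis: "real (length (bin ist)) \<le> G" using biA bin_mono[of ist iA] unfolding ist_def by simp
  have bv1: "length (bin v) \<le> 2 ^ ist"
  proof (rule bin_len_le)
    have "v \<le> 2 ^ 2 ^ ist - 1" by (simp add: v_def)
    moreover have "(0::nat) < 2 ^ 2 ^ ist" by simp
    ultimately show "v < 2 ^ 2 ^ ist" by linarith
  qed
  have pis: "2 ^ ist \<le> 2 * length (bin q) + 1"
  proof (cases "ist = 0")
    case True then show ?thesis by simp
  next
    case False
    have "ist - 1 < iA" "ist - 1 < iB" using False unfolding ist_def by auto
    then have "2 ^ (ist - 1) < length (bin aA)" "2 ^ (ist - 1) < length (bin aB)"
      using ilev_min unfolding iA_def iB_def by auto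
    then have "2 ^ (ist - 1) < length (bin q)" using qd by (cases "aA \<le> aB") (auto simp: min_def)
    moreover have "(2::nat) ^ ist = 2 * 2 ^ (ist - 1)" using False by (cases "ist") auto
    ultimately show ?thesis by linarith
  qed
  have cost: "comm_cost tr = length (bin sA) + length (bin sB) + length (bin iA) + length (bin ist) + 4
      + comm_cost (tailmsgs A B k v)"
    unfolding tr_def t0_def comm_cost_append by (simp add: comm_cost_def)
  have "comm_cost tr \<le> length (bin sA) + length (bin sB) + length (bin iA) + length (bin ist) + 4
      + length (bin v) + length (bin q) + 9"
    using cost tail_cost[of A B k v] unfolding q_def by linarith
  then have "real (comm_cost tr) \<le> real (length (bin sA)) + real (length (bin sB)) + real (length (bin iA))
      + real (length (bin ist)) + 13 + real (length (bin v)) + real (length (bin q))"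
    by linarith
  moreover have "real (length (bin v)) \<le> 2 * real (length (bin q)) + 1"
  proof -
    have "length (bin v) \<le> 2 * length (bin q) + 1" using bv1 pis by linarith
    then have "real (length (bin v)) \<le> real (2 * length (bin q) + 1)" by (simp only: of_nat_le_iff)
    then show ?thesis by simp
  qed
  ultimately have "real (comm_cost tr) \<le> 5 * W + 2 * G + 14" using bsA bsB bq biA bis by linarith
  also have "\<dots> \<le> 100 * (1 + lg (real (lcp A B)) + lg (lg (lg (real (length A)))))"
    unfolding W_def G_def using lg_ge1[of "real (lcp A B)"] lg_ge1[of "lg (lg (real (length A)))"] by (simp add: distrib_left)
  finally have costb: "real (comm_cost tr) \<le> 100 * (1 + lg (real (lcp A B)) + lg (lg (lg (real (length A)))))" .
  show ?thesis unfolding good_run_def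
  proof (intro exI[of _ 9] conjI allI impI)
    show "halt P2 k r (transcript P2 A B k r 9)" using T[of 9] ltr unfolding P2_def by simp
    show "\<not> halt P2 k r (transcript P2 A B k r m)" if "m < 9" for m
      using T[of m] that ltr unfolding P2_def by simp
    show "real 9 \<le> (100::real)" by simp
    show "real (comm_cost (transcript P2 A B k r 9)) \<le> 100 * (1 + lg (real (lcp A B)) + lg (lg (lg (real (length A)))))"
      using T[of 9] ltr costb by simp
    show "outA P2 A k r (transcript P2 A B k r 9) = lcp A B" using T[of 9] ltr L unfolding P2_def by simp
    show "outB P2 B k r (transcript P2 A B k r 9) = lcp A B" using T[of 9] ltr L unfolding P2_def by simp
  qed
qed

definition found :: "bool list list \<Rightarrow> bool" where
  "found t = (\<exists>i. 2 \<le> i \<and> i < length t \<and> t ! i \<noteq> [False])"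
definition fpos :: "bool list list \<Rightarrow> nat" where
  "fpos t = (LEAST i. 2 \<le> i \<and> i < length t \<and> t ! i \<noteq> [False])"

definition step1 :: "'a list \<Rightarrow> nat \<Rightarrow> bool list list \<Rightarrow> bool list" where
  "step1 S k t = (let n = length t; so = unbin (t ! (if even n then 1 else 0)); a = av S k so in
     if n < 2 then bin (ss S k)
     else if \<not> found t then (if length (bin a) \<le> 2 ^ (n - 2) then True # bin a else [False])
     else tailmsg S k t (fpos t))"

definition P1 :: "'a protocol" where
  "P1 = \<lparr>msgA = (\<lambda>x k r t. step1 x k t), msgB = (\<lambda>x k r t. step1 x k t),
         halt = (\<lambda>k r t. found t \<and> length t = fpos t + 5),
         outA = (\<lambda>x k r t. outp x k t (fpos t)), outB = (\<lambda>x k r t. outp x k t (fpos t))\<rparr>"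

lemma lg_ten: "(x::real) \<ge> 1 \<Longrightarrow> log 2 (10 * x) \<le> 4 + lg x"
proof -
  assume x: "x \<ge> 1"
  have "log 2 (10 * x) = log 2 10 + log 2 x" using x by (simp add: log_mult)
  moreover have "log 2 10 \<le> (4::real)"
  proof -
    have "log 2 10 \<le> log 2 (16::real)" by (rule log_mono) auto
    also have "log 2 (16::real) = 4" using log_pow_cancel[of 2 4] by simp
    finally show ?thesis .
  qed
  moreover have "log 2 x \<le> lg x" using x by (intro log2_le_lg) auto
  ultimately show ?thesis by linarith
qed

lemma P1_ok:
  fixes A B :: "'a list"
  defines "k \<equiv> lcp (lz77 A) (lz77 B)"
  shows "good_run P1 A B k r (100 * (1 + lg (lg (real (lcp A B))))) (100 * (1 + lg (real (lcp A B)))) (lcp A B)"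
proof -
  have kk: "k = lcp (lz77 A) (lz77 B)" unfolding k_def ..
  have kk': "k = lcp (lz77 B) (lz77 A)" using kk lcp_comm by metis
  define sA where "sA = ss A k"
  define sB where "sB = ss B k"
  define aA where "aA = av A k sB"
  define aB where "aB = av B k sA"
  define val where "val j = (if even j then aA else aB)" for j :: nat
  define J where "J = (LEAST j. length (bin (val j)) \<le> 2 ^ j)"
  define f where "f = J + 2"
  define U where "U = (if even J then A else B)"
  define V where "V = (if even J then B else A)"
  define v where "v = val J"
  define t0 where "t0 = [bin sA, bin sB] @ replicate J [False]"
  define tr where "tr = t0 @ tailmsgs U V k v"
  define q where "q = qv A B k"
  have qd: "q = min aA aB" unfolding q_def qv_def aA_def aB_def sA_def sB_def ..
  have kUV: "k = lcp (lz77 U) (lz77 V)" unfolding U_def V_def using kk kk' by auto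
  have qUV: "qv U V k = q" unfolding q_def U_def V_def qv_def by (auto simp: min.commute)
  have lt0: "length t0 = f" unfolding t0_def f_def by simp
  have ltr: "length tr = J + 7" unfolding tr_def using lt0 by (simp add: f_def tailmsgs_def)
  define j0 where "j0 = length (bin aA) + length (bin aB)"
  have Jex: "length (bin (val j0)) \<le> 2 ^ j0"
  proof -
    have "length (bin (val j0)) \<le> j0" unfolding val_def j0_def by auto
    also have "j0 < 2 ^ j0" by (rule less_exp)
    finally show ?thesis by simp
  qed
  have JL: "length (bin (val J)) \<le> 2 ^ J" unfolding J_def by (rule LeastI[of "\<lambda>j. length (bin (val j)) \<le> 2 ^ j" j0, OF Jex])
  have Jmin: "j < J \<Longrightarrow> \<not> length (bin (val j)) \<le> 2 ^ j" for j unfolding J_def by (rule not_less_Least)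
  have vUV: "v = av U k (ss V k)" unfolding v_def val_def U_def V_def aA_def aB_def sA_def sB_def by simp
  have t0i: "t0 ! i = [False]" if "2 \<le> i" "i < f" for i
    using that unfolding t0_def f_def by (simp add: nth_append)
  have trf: "tr ! f = True # bin v" unfolding tr_def using lt0 by (simp add: nth_append tailmsgs_def)
  have tri: "tr ! i = t0 ! i" if "i < f" for i unfolding tr_def using lt0 that by (simp add: nth_append)
  have nf: "\<not> found (take m tr)" if "m \<le> f" for m
    unfolding found_def using that tri t0i by auto
  have fp: "found (take m tr) \<and> fpos (take m tr) = f" if "f < m" "m \<le> length tr" for m
  proof -
    have P: "2 \<le> f \<and> f < length (take m tr) \<and> take m tr ! f \<noteq> [False]"
      using that trf unfolding f_def by auto
    have "fpos (take m tr) = f" unfolding fpos_def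
    proof (rule Least_equality[of "\<lambda>i. 2 \<le> i \<and> i < length (take m tr) \<and> take m tr ! i \<noteq> [False]", OF P])
      fix i assume "2 \<le> i \<and> i < length (take m tr) \<and> take m tr ! i \<noteq> [False]"
      then show "f \<le> i"
      proof -
        assume h: "2 \<le> i \<and> i < length (take m tr) \<and> take m tr ! i \<noteq> [False]"
        show "f \<le> i"
        proof (rule ccontr)
          assume "\<not> f \<le> i"
          then have "take m tr ! i = [False]" using h tri t0i by simp
          then show False using h by simp
        qed
      qed
    qed
    then show ?thesis using P unfolding found_def by blast
  qed
  have spk: "(if even (n - f) then U else V) = (if even n then A else B)" if "f \<le> n" for n
    using that unfolding U_def V_def f_def by (auto simp: even_diff_nat)
  have steps: "(if even n then msgA P1 A k r (take n tr) else msgB P1 B k r (take n tr)) = tr ! n"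
    if n: "n < length tr" for n
  proof -
    have m: "(if even n then msgA P1 A k r (take n tr) else msgB P1 B k r (take n tr))
       = step1 (if even n then A else B) k (take n tr)" unfolding P1_def by simp
    consider "n = 0" | "n = 1" | "2 \<le> n" "n \<le> f" | "f < n" "n < f + 5" using n ltr f_def by linarith
    then have "step1 (if even n then A else B) k (take n tr) = tr ! n"
    proof cases
      case 1 then show ?thesis by (simp add: step1_def tr_def t0_def sA_def)
    next
      case 2 then show ?thesis by (simp add: step1_def tr_def t0_def sB_def)
    next
      case 3
      have ln: "length (take n tr) = n" using 3 ltr f_def by simp
      have soe: "unbin (take n tr ! (if even n then 1 else 0)) = (if even n then sB else sA)"
        using 3 lt0 unfolding tr_def t0_def by (auto simp: nth_append)
      have av: "av (if even n then A else B) k (unbin (take n tr ! (if even n then 1 else 0))) = val (n - 2)"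
        unfolding soe val_def aA_def aB_def using 3 by (auto simp: even_diff_nat)
      have st: "step1 (if even n then A else B) k (take n tr) =
          (if length (bin (val (n - 2))) \<le> 2 ^ (n - 2) then True # bin (val (n - 2)) else [False])"
        unfolding step1_def Let_def ln av using 3 nf[of n] by simp
      show ?thesis
      proof (cases "n = f")
        case True
        then show ?thesis unfolding st using JL trf v_def f_def by simp
      next
        case False
        then have "n - 2 < J" "n < f" using 3 f_def by auto
        then show ?thesis unfolding st using Jmin[of "n - 2"] tri t0i 3 by simp
      qed
    next
      case 4
      have fpn: "found (take n tr)" "fpos (take n tr) = f" using fp[of n] 4 n by auto
      have st: "step1 S k (take n tr) = tailmsg S k (take n tr) f" for S
        using 4 n fpn unfolding step1_def Let_def f_def by simp
      have tl: "tailmsg (if even (n - f) then U else V) k (take n (t0 @ tailmsgs U V k v)) f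
           = (t0 @ tailmsgs U V k v) ! n"
      proof (rule tail_ok[OF kUV lt0])
        show "unbin (t0 ! (if even m then 1 else 0)) = ss (if even (m - f) then V else U) k" if "f \<le> m" for m :: nat
          using that spk[OF that] unfolding t0_def sA_def sB_def U_def V_def
          by (auto split: if_splits)
        show "min v (av V k (ss U k)) = qv U V k" unfolding vUV qv_def ..
      qed (use 4 f_def in auto)
      have sp: "(if even (n - f) then U else V) = (if even n then A else B)" using spk[of n] 4 by simp
      have "tailmsg (if even n then A else B) k (take n tr) f = tr ! n" using tl[folded tr_def] unfolding sp .
      then show ?thesis unfolding st .
    qed
    then show ?thesis unfolding m .
  qed
  have T: "m \<le> J + 7 \<Longrightarrow> transcript P1 A B k r m = take m tr" for m
    using transcript_eq[of tr P1 A k r B m, OF steps] ltr by simp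
  have Lo: "outp U k tr f = lcp U V" "outp V k tr f = lcp U V"
    using tail_out[OF kUV lt0] unfolding tr_def by auto
  have lUV: "lcp U V = lcp A B" unfolding U_def V_def by (auto simp: lcp_comm)
  have LA: "outp A k tr f = lcp A B" "outp B k tr f = lcp A B"
    using Lo lUV unfolding U_def V_def by (auto split: if_splits)
  note C = core[where A=A and B=B, folded kk]
  have Lq: "lcp A B = pp A k + q + (if (pp A k + q < length A \<and> pp A k + q < length B \<and> A ! (pp A k + q) = B ! (pp A k + q)) then 1 else 0)"
    using C(1) unfolding q_def qv_def .
  have sAL: "sA \<le> lcp A B" using C(5) Lq unfolding sA_def by linarith
  have "ss B k \<le> pp B k" using core(5)[where A=B and B=A, folded kk'] .
  then have sBL: "sB \<le> lcp A B" using C(4) Lq unfolding sB_def by linarith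
  have qL: "q \<le> lcp A B" using Lq by linarith
  define W where "W = 1 + lg (real (lcp A B))"
  have bsA: "real (length (bin sA)) \<le> W" using binlen_le_L[OF sAL] unfolding W_def .
  have bsB: "real (length (bin sB)) \<le> W" using binlen_le_L[OF sBL] unfolding W_def .
  have bq: "real (length (bin q)) \<le> W" using binlen_le_L[OF qL] unfolding W_def .
  define i0 where "i0 = ilev q"
  have "J \<le> i0 + 1"
  proof -
    have bq0: "length (bin q) \<le> 2 ^ j" if "i0 \<le> j" for j
    proof -
      have "(2::nat) ^ i0 \<le> 2 ^ j" by (rule power_increasing) (use that in auto)
      then show ?thesis using ilev_ok[of q] unfolding i0_def by linarith
    qed
    obtain j where j: "i0 \<le> j" "j \<le> i0 + 1" "val j = q"
    proof (cases "q = aA")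
      case True
      show ?thesis
        by (rule that[of "if even i0 then i0 else i0 + 1"]) (use True in \<open>auto simp: val_def\<close>)
    next
      case False
      then have "q = aB" using qd by (auto simp: min_def split: if_splits)
      show ?thesis
        by (rule that[of "if odd i0 then i0 else i0 + 1"]) (use \<open>q = aB\<close> in \<open>auto simp: val_def\<close>)
    qed
    have "J \<le> j" unfolding J_def by (rule Least_le) (use bq0[OF j(1)] j(3) in simp)
    then show ?thesis using j by simp
  qed
  have pi0: "2 ^ i0 \<le> 2 * length (bin q) + 1"
  proof (cases "i0 = 0")
    case True then show ?thesis by simp
  next
    case False
    have "2 ^ (i0 - 1) < length (bin q)" using ilev_min[of "i0 - 1" q] False unfolding i0_def by simp
    moreover have "(2::nat) ^ i0 = 2 * 2 ^ (i0 - 1)" using False by (cases i0) auto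
    ultimately show ?thesis by linarith
  qed
  have pJ: "2 ^ J \<le> 4 * length (bin q) + 2"
  proof -
    have "(2::nat) ^ J \<le> 2 ^ (i0 + 1)" by (rule power_increasing) (use \<open>J \<le> i0 + 1\<close> in auto)
    then show ?thesis using pi0 by simp
  qed
  have pJr: "(2::real) ^ J \<le> 4 * real (length (bin q)) + 2"
  proof -
    have "real (2 ^ J) \<le> real (4 * length (bin q) + 2)" using pJ by (simp only: of_nat_le_iff)
    then show ?thesis by simp
  qed
  have "(2::real) ^ J \<le> 10 * lg (real (lcp A B))" using pJr bq lg_ge1[of "real (lcp A B)"] unfolding W_def by linarith
  then have "real J \<le> log 2 (10 * lg (real (lcp A B)))" by (rule pow_le_log)
  also have "\<dots> \<le> 4 + lg (lg (real (lcp A B)))" by (rule lg_ten[OF lg_ge1])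
  finally have Jr: "real J \<le> 4 + lg (lg (real (lcp A B)))" .
  have rounds: "real (J + 7) \<le> 100 * (1 + lg (lg (real (lcp A B))))"
    using Jr lg_ge1[of "lg (real (lcp A B))"] by simp
  have bv: "length (bin v) \<le> 2 ^ J" using JL unfolding v_def .
  have Jle: "J \<le> 2 ^ J" using less_exp[of J] by simp
  have cost: "comm_cost tr = length (bin sA) + length (bin sB) + 2 + 2 * J + comm_cost (tailmsgs U V k v)"
    unfolding tr_def t0_def comm_cost_append by (simp add: comm_cost_def sum_list_replicate)
  have "comm_cost tr \<le> length (bin sA) + length (bin sB) + 2 + 2 * J + length (bin v) + length (bin q) + 9"
    using cost tail_cost[of U V k v] unfolding qUV by linarith
  also have "\<dots> \<le> length (bin sA) + length (bin sB) + 11 + 3 * (4 * length (bin q) + 2) + length (bin q)"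
  proof -
    have "2 * J + length (bin v) \<le> 12 * length (bin q) + 6" using bv Jle pJ by linarith
    then show ?thesis by simp
  qed
  finally have "real (comm_cost tr) \<le> real (length (bin sA) + length (bin sB) + 11 + 3 * (4 * length (bin q) + 2) + length (bin q))"
    by (simp only: of_nat_le_iff)
  then have "real (comm_cost tr) \<le> 15 * W + 17" using bsA bsB bq by simp
  also have "\<dots> \<le> 100 * (1 + lg (real (lcp A B)))"
    unfolding W_def using lg_ge1[of "real (lcp A B)"] by (simp add: distrib_left)
  finally have costb: "real (comm_cost tr) \<le> 100 * (1 + lg (real (lcp A B)))" .
  have hT: "halt P1 k r (take m tr) \<longleftrightarrow> m = J + 7" if "m \<le> J + 7" for m
  proof (cases "m \<le> f")
    case True then show ?thesis using nf[OF True] unfolding P1_def f_def by auto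
  next
    case False then show ?thesis using fp[of m] that ltr unfolding P1_def f_def by auto
  qed
  show ?thesis unfolding good_run_def
  proof (intro exI[of _ "J + 7"] conjI allI impI)
    show "halt P1 k r (transcript P1 A B k r (J + 7))" using T[of "J + 7"] hT[of "J + 7"] by simp
    show "\<not> halt P1 k r (transcript P1 A B k r m)" if "m < J + 7" for m
      using T[of m] hT[of m] that by simp
    show "real (J + 7) \<le> 100 * (1 + lg (lg (real (lcp A B))))" by (fact rounds)
    show "real (comm_cost (transcript P1 A B k r (J + 7))) \<le> 100 * (1 + lg (real (lcp A B)))"
      using T[of "J + 7"] ltr costb by simp
    have fpt: "fpos tr = f" using fp[of "length tr"] ltr f_def by simp
    show "outA P1 A k r (transcript P1 A B k r (J + 7)) = lcp A B"
      using T[of "J + 7"] ltr LA fpt unfolding P1_def by simp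
    show "outB P1 B k r (transcript P1 A B k r (J + 7)) = lcp A B"
      using T[of "J + 7"] ltr LA fpt unfolding P1_def by simp
  qed
qed

lemma coins_prob: "prob_space coins"
  unfolding coins_def by (rule prob_space_PiM) (rule prob_space_measure_pmf)

lemma measure_all: "(\<And>r. Q r) \<Longrightarrow> measure coins {r \<in> space coins. Q r} = 1"
proof -
  assume "\<And>r. Q r"
  then have "{r \<in> space coins. Q r} = space coins" by auto
  then show ?thesis using prob_space.prob_space[OF coins_prob] by simp
qed

theorem lemma10:
  "(\<exists>(P :: 'a protocol) c C. c > 1/2 \<and>
      (\<forall>A B :: 'a list.
         let k = lcp (lz77 A) (lz77 B); L = lcp A B in
         measure coins {r \<in> space coins.
            good_run P A B k r (C * (1 + lg (lg (real L)))) (C * (1 + lg (real L))) L} \<ge> c))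
 \<and> (\<exists>(P :: 'a protocol) c C. c > 1/2 \<and>
      (\<forall>A B :: 'a list.
         let k = lcp (lz77 A) (lz77 B); L = lcp A B in
         measure coins {r \<in> space coins.
            good_run P A B k r C
              (C * (1 + lg (real L) + lg (lg (lg (real (length A)))))) L} \<ge> c))"
proof (intro conjI)
  show "\<exists>(P :: 'a protocol) c C. c > 1/2 \<and>
      (\<forall>A B :: 'a list.
         let k = lcp (lz77 A) (lz77 B); L = lcp A B in
         measure coins {r \<in> space coins.
            good_run P A B k r (C * (1 + lg (lg (real L)))) (C * (1 + lg (real L))) L} \<ge> c)"
  proof (rule exI[of _ P1], rule exI[of _ "1::real"], rule exI[of _ "100::real"], intro conjI allI)
    fix A B :: "'a list"
    have "measure coins {r \<in> space coins. good_run P1 A B (lcp (lz77 A) (lz77 B)) r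
        (100 * (1 + lg (lg (real (lcp A B))))) (100 * (1 + lg (real (lcp A B)))) (lcp A B)} = 1"
      by (rule measure_all) (rule P1_ok)
    then show "let k = lcp (lz77 A) (lz77 B); L = lcp A B in
         measure coins {r \<in> space coins.
            good_run P1 A B k r (100 * (1 + lg (lg (real L)))) (100 * (1 + lg (real L))) L} \<ge> 1"
      unfolding Let_def by simp
  qed simp
  show "\<exists>(P :: 'a protocol) c C. c > 1/2 \<and>
      (\<forall>A B :: 'a list.
         let k = lcp (lz77 A) (lz77 B); L = lcp A B in
         measure coins {r \<in> space coins.
            good_run P A B k r C
              (C * (1 + lg (real L) + lg (lg (lg (real (length A)))))) L} \<ge> c)"
  proof (rule exI[of _ P2], rule exI[of _ "1::real"], rule exI[of _ "100::real"], intro conjI allI)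
    fix A B :: "'a list"
    have "measure coins {r \<in> space coins. good_run P2 A B (lcp (lz77 A) (lz77 B)) r
        100 (100 * (1 + lg (real (lcp A B)) + lg (lg (lg (real (length A)))))) (lcp A B)} = 1"
      by (rule measure_all) (rule P2_ok)
    then show "let k = lcp (lz77 A) (lz77 B); L = lcp A B in
         measure coins {r \<in> space coins.
            good_run P2 A B k r 100
              (100 * (1 + lg (real L) + lg (lg (lg (real (length A)))))) L} \<ge> 1"
      unfolding Let_def by simp
  qed simp
qed

end
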